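(* Let $\mathcal{T}$ be a locally compact, $\sigma$-compact Hausdorff space, $\mu$ a finite positive Radon measure on $\mathcal{T}$ with $\mu(\mathcal{T})>0$, $1\le p<\infty$ and $q$ the conjugate exponent. For $\varepsilon>1$ let $S_{\varepsilon}^{p}=\{f\in L^{q}_{\mu}(\mathcal{T})\text{ real-valued}:\|f\|_q\le\varepsilon,\ \int f\,d\mu=\mu(\mathcal{T})^{1/p}\}$ and $L^{p}(\mathcal{T})_{\varepsilon}^{+}=\{g\in L^{p}_{\mu}(\mathcal{T})\text{ real-valued}:\int gf\,d\mu\ge0\ \forall f\in S_{\varepsilon}^{p}\}$. Let $L^{p}(\mathcal{T})_{+}$ be the cone of $\mu$-a.e. nonnegative functions in $L^p_\mu(\mathcal{T})$. Then there exists $\varepsilon>1$ such that the cones $L^{p}(\mathcal{T})_{+}$ and $L^{p}(\mathcal{T})_{\varepsilon}^{+}$ are comparable (one contains the other) if and only if $\operatorname{supp}(\mu)$ is finite.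
   Context: $L^p_\mu(\mathcal{T})$ is a unital $\ast$-normed space (involution = complex conjugation) with unit $e_p=\mu(\mathcal{T})^{-1/p}1$, dual $L^q_\mu(\mathcal{T})$ via $\langle g,f\rangle=\int gf\,d\mu$; the set $S_\varepsilon^p$ is the set of unital hermitian functionals of norm at most $\varepsilon$, and $L^{p}(\mathcal{T})_{\varepsilon}^{+}$ is the associated projective cone. *)

theory Defs
  imports "HOL-Probability.Probability"
begin

definition sigma_compact_type :: "'a::topological_space itself \<Rightarrow> bool" where
  "sigma_compact_type _ \<longleftrightarrow>
     (\<exists>K :: nat \<Rightarrow> 'a set. (\<forall>n. compact (K n)) \<and> (\<Union>n. K n) = UNIV)"

definition radon_measure :: "'a::topological_space measure \<Rightarrow> bool" where
  "radon_measure M \<longleftrightarrow>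
     sets M = sets borel \<and>
     (\<forall>K. compact K \<longrightarrow> emeasure M K < \<infinity>) \<and>
     (\<forall>B\<in>sets M. emeasure M B = (INF U\<in>{U. open U \<and> B \<subseteq> U}. emeasure M U)) \<and>
     (\<forall>U. open U \<longrightarrow> emeasure M U = (SUP K\<in>{K. compact K \<and> K \<subseteq> U}. emeasure M K))"

definition measure_support :: "'a::topological_space measure \<Rightarrow> 'a set" where
  "measure_support M = {x. \<forall>U. open U \<longrightarrow> x \<in> U \<longrightarrow> emeasure M U > 0}"

definition Lr_fun :: "'a measure \<Rightarrow> real \<Rightarrow> ('a \<Rightarrow> real) \<Rightarrow> bool" where
  "Lr_fun M r f \<longleftrightarrow> f \<in> borel_measurable M \<and> integrable M (\<lambda>x. \<bar>f x\<bar> powr r)"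

definition Lr_norm :: "'a measure \<Rightarrow> real \<Rightarrow> ('a \<Rightarrow> real) \<Rightarrow> real" where
  "Lr_norm M r f = (\<integral>x. \<bar>f x\<bar> powr r \<partial>M) powr (1 / r)"

definition Linf_fun :: "'a measure \<Rightarrow> ('a \<Rightarrow> real) \<Rightarrow> bool" where
  "Linf_fun M f \<longleftrightarrow> f \<in> borel_measurable M \<and> esssup M (\<lambda>x. ereal \<bar>f x\<bar>) < \<infinity>"

definition Linf_norm :: "'a measure \<Rightarrow> ('a \<Rightarrow> real) \<Rightarrow> real" where
  "Linf_norm M f = real_of_ereal (esssup M (\<lambda>x. ereal \<bar>f x\<bar>))"

definition dual_ball :: "'a measure \<Rightarrow> real \<Rightarrow> real \<Rightarrow> ('a \<Rightarrow> real) \<Rightarrow> bool" where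
  "dual_ball M p \<epsilon> f \<longleftrightarrow>
     (if p = 1 then Linf_fun M f \<and> Linf_norm M f \<le> \<epsilon>
      else Lr_fun M (p / (p - 1)) f \<and> Lr_norm M (p / (p - 1)) f \<le> \<epsilon>)"

definition S_eps :: "'a measure \<Rightarrow> real \<Rightarrow> real \<Rightarrow> ('a \<Rightarrow> real) set" where
  "S_eps M p \<epsilon> = {f. dual_ball M p \<epsilon> f \<and>
       (\<integral>x. f x \<partial>M) = measure M (space M) powr (1 / p)}"

definition Lp_cone_eps :: "'a measure \<Rightarrow> real \<Rightarrow> real \<Rightarrow> ('a \<Rightarrow> real) set" where
  "Lp_cone_eps M p \<epsilon> = {g. Lr_fun M p g \<and> (\<forall>f\<in>S_eps M p \<epsilon>. (\<integral>x. g x * f x \<partial>M) \<ge> 0)}"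

definition Lp_pos :: "'a measure \<Rightarrow> real \<Rightarrow> ('a \<Rightarrow> real) set" where
  "Lp_pos M p = {g. Lr_fun M p g \<and> (AE x in M. g x \<ge> 0)}"

end

theory Submission
  imports Defs
begin

lemma fm_int_ind:
  assumes "finite_measure M" "A \<in> sets M"
  shows "integrable M (\<lambda>x. indicator A x :: real)"
  using finite_measure.emeasure_finite[OF assms(1), of A] assms(2) by (simp add: less_top)

lemma holder_ind:
  assumes M: "finite_measure M" and p: "1 \<le> p" and e: "\<epsilon> > 0"
    and f: "dual_ball M p \<epsilon> f" and A: "A \<in> sets M"
  shows "integrable M f \<and> (\<integral>x. \<bar>f x\<bar> * indicator A x \<partial>M) \<le> \<epsilon> * measure M A powr (1/p)"
proof (cases "p = 1")
  case True
  then have fm: "f \<in> borel_measurable M" and es: "esssup M (\<lambda>x. ereal \<bar>f x\<bar>) < \<infinity>"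
    and le: "real_of_ereal (esssup M (\<lambda>x. ereal \<bar>f x\<bar>)) \<le> \<epsilon>"
    using f by (auto simp: dual_ball_def Linf_fun_def Linf_norm_def)
  have "AE x in M. ereal \<bar>f x\<bar> \<le> esssup M (\<lambda>x. ereal \<bar>f x\<bar>)" by (rule esssup_AE)
  moreover have "esssup M (\<lambda>x. ereal \<bar>f x\<bar>) \<le> ereal \<epsilon>"
    using es le by (cases "esssup M (\<lambda>x. ereal \<bar>f x\<bar>)") auto
  ultimately have "AE x in M. ereal \<bar>f x\<bar> \<le> ereal \<epsilon>"
    by (auto elim!: eventually_mono dest: order.trans)
  then have bnd: "AE x in M. \<bar>f x\<bar> \<le> \<epsilon>" by simp
  have intf: "integrable M f"
    using finite_measure.integrable_const_bound[OF M, of f \<epsilon>] bnd fm by auto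
  have "(\<integral>x. \<bar>f x\<bar> * indicator A x \<partial>M) \<le> (\<integral>x. \<epsilon> * indicator A x \<partial>M)"
    apply (rule integral_mono_AE)
    using intf A M fm_int_ind[OF M A] apply (auto intro!: integrable_real_mult_indicator)
    using bnd by (auto split: split_indicator)
  also have "\<dots> = \<epsilon> * measure M A" using A by simp
  finally show ?thesis using True intf by simp
next
  case False
  define q where "q = p / (p - 1)"
  have p1: "p > 1" using p False by auto
  have q1: "q > 1" using p1 by (simp add: q_def)
  have pq: "1/p + 1/q = 1" using p1 by (simp add: q_def field_simps)
  have fm: "f \<in> borel_measurable M" and iq: "integrable M (\<lambda>x. \<bar>f x\<bar> powr q)"
    and nq: "(\<integral>x. \<bar>f x\<bar> powr q \<partial>M) powr (1/q) \<le> \<epsilon>"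
    using f False by (auto simp: dual_ball_def Lr_fun_def Lr_norm_def q_def)
  define I where "I = (\<integral>x. \<bar>f x\<bar> powr q \<partial>M)"
  have I0: "I \<ge> 0" unfolding I_def by (rule integral_nonneg_AE) auto
  have Ile: "I \<le> \<epsilon> powr q"
  proof -
    have "I = (I powr (1/q)) powr q" using I0 q1 by (simp add: powr_powr)
    also have "\<dots> \<le> \<epsilon> powr q" using nq q1 I0 unfolding I_def[symmetric]
      by (intro powr_mono2) auto
    finally show ?thesis .
  qed
  have intf: "integrable M f"
  proof (rule Bochner_Integration.integrable_bound[of _ "\<lambda>x. 1 + \<bar>f x\<bar> powr q"])
    show "integrable M (\<lambda>x. 1 + \<bar>f x\<bar> powr q)"
      using iq M by (intro Bochner_Integration.integrable_add) (auto simp: finite_measure.integrable_const)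
    show "f \<in> borel_measurable M" by (rule fm)
    show "AE x in M. norm (f x) \<le> norm (1 + \<bar>f x\<bar> powr q)"
    proof (rule AE_I2)
      fix x
      show "norm (f x) \<le> norm (1 + \<bar>f x\<bar> powr q)"
      proof (cases "\<bar>f x\<bar> \<le> 1")
        case True then show ?thesis by (simp add: add_increasing2)
      next
        case False
        then have "\<bar>f x\<bar> powr 1 \<le> \<bar>f x\<bar> powr q" using q1 by (intro powr_mono) auto
        then show ?thesis using False by simp
      qed
    qed
  qed
  show ?thesis
  proof (cases "measure M A = 0")
    case True
    have "(\<integral>x. \<bar>f x\<bar> * indicator A x \<partial>M) = 0"
    proof -
      have "AE x in M. x \<notin> A" using True A M
        by (intro AE_I'[of A]) (auto simp: finite_measure.emeasure_eq_measure)
      then have "AE x in M. \<bar>f x\<bar> * indicator A x = 0" by (auto split: split_indicator)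
      then show ?thesis by (simp add: integral_eq_zero_AE)
    qed
    then show ?thesis using intf True by simp
  next
    case False
    define a where "a = measure M A"
    have a0: "a > 0" unfolding a_def using False measure_nonneg[of M A] by linarith
    define c where "c = a powr (-1/p)"
    have c0: "c > 0" using a0 by (simp add: c_def)
    have cp: "c powr p = 1 / a" using a0 p1 by (simp add: c_def powr_powr powr_minus_divide powr_divide)
    define J where "J = (\<integral>x. \<bar>f x\<bar> * indicator A x \<partial>M)"
    have iJ: "integrable M (\<lambda>x. \<bar>f x\<bar> * indicator A x)"
      using intf A by (intro integrable_real_mult_indicator) auto
    have iA: "integrable M (\<lambda>x. indicator A x :: real)"
      using fm_int_ind[OF M A] .
    have "(c / \<epsilon>) * J = (\<integral>x. (\<bar>f x\<bar> / \<epsilon>) * c * indicator A x \<partial>M)"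
      unfolding J_def by (simp add: field_simps)
    also have "\<dots> \<le> (\<integral>x. (\<bar>f x\<bar> powr q / \<epsilon> powr q) / q + (1/a) / p * indicator A x \<partial>M)"
    proof (rule integral_mono)
      show "integrable M (\<lambda>x. (\<bar>f x\<bar> / \<epsilon>) * c * indicator A x)"
        using iJ by (simp add: field_simps)
      show "integrable M (\<lambda>x. (\<bar>f x\<bar> powr q / \<epsilon> powr q) / q + (1/a) / p * indicator A x)"
        using iq iA by (intro Bochner_Integration.integrable_add) auto
      fix x
      have Y: "(\<bar>f x\<bar> / \<epsilon>) * c \<le> (\<bar>f x\<bar> / \<epsilon>) powr q / q + c powr p / p"
        using Youngs_inequality[of q p "\<bar>f x\<bar> / \<epsilon>" c] q1 p1 pq e c0 by (simp add: add.commute)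
      have Q: "(\<bar>f x\<bar> / \<epsilon>) powr q = \<bar>f x\<bar> powr q / \<epsilon> powr q"
        using e by (simp add: powr_divide)
      have "0 \<le> \<bar>f x\<bar> powr q / \<epsilon> powr q / q" using q1 by simp
      then show "(\<bar>f x\<bar> / \<epsilon>) * c * indicator A x \<le> (\<bar>f x\<bar> powr q / \<epsilon> powr q) / q + (1/a) / p * indicator A x"
        using Y Q cp by (auto split: split_indicator)
    qed
    also have "\<dots> = I / \<epsilon> powr q / q + (1/a)/p * a"
      using iq iA A by (simp add: I_def a_def)
    also have "\<dots> \<le> 1 / q + 1 / p"
    proof -
      have "I / \<epsilon> powr q \<le> 1" using Ile e by simp
      then have "I / \<epsilon> powr q / q \<le> 1 / q" using q1 by (intro divide_right_mono) auto
      then show ?thesis using a0 by simp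
    qed
    also have "\<dots> = 1" using pq by simp
    finally have "c / \<epsilon> * J \<le> 1" .
    then have "J \<le> \<epsilon> / c" using c0 e by (simp add: field_simps)
    also have "\<epsilon> / c = \<epsilon> * a powr (1/p)" using a0 by (simp add: c_def powr_minus_divide field_simps)
    finally show ?thesis using intf by (simp add: J_def a_def)
  qed
qed

lemma radon_sets:
  assumes "radon_measure M"
  shows "sets M = sets borel" "space M = UNIV"
  using assms sets_eq_imp_space_eq[of M borel] by (auto simp: radon_measure_def)

lemma support_null:
  fixes M :: "'a::t2_space measure"
  assumes R: "radon_measure M"
  shows "emeasure M (- measure_support M) = 0"
proof -
  note S = radon_sets[OF R]
  define V where "V = {U::'a set. open U \<and> emeasure M U = 0}"
  have eq: "- measure_support M = \<Union>V"
  proof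
    show "- measure_support M \<subseteq> \<Union>V"
    proof
      fix x assume "x \<in> - measure_support M"
      then obtain U where U: "open U" "x \<in> U" "\<not> emeasure M U > 0"
        unfolding measure_support_def by blast
      then have "U \<in> V" unfolding V_def by (simp add: not_less)
      then show "x \<in> \<Union>V" using U by blast
    qed
    show "\<Union>V \<subseteq> - measure_support M"
    proof
      fix x assume "x \<in> \<Union>V"
      then obtain U where "U \<in> V" "x \<in> U" by blast
      then have "open U" "emeasure M U = 0" "x \<in> U" unfolding V_def by auto
      then show "x \<in> - measure_support M" unfolding measure_support_def by auto
    qed
  qed
  have op: "open (- measure_support M)" unfolding eq V_def by (rule open_Union) blast
  have "emeasure M (- measure_support M) = (SUP K\<in>{K. compact K \<and> K \<subseteq> - measure_support M}. emeasure M K)"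
  proof -
    have "\<forall>U. open U \<longrightarrow> emeasure M U = (SUP K\<in>{K. compact K \<and> K \<subseteq> U}. emeasure M K)"
      using R unfolding radon_measure_def by blast
    then show ?thesis using op by blast
  qed
  also have "\<dots> \<le> 0"
  proof (rule SUP_least)
    fix K assume K: "K \<in> {K. compact K \<and> K \<subseteq> - measure_support M}"
    then have cK: "compact K" and "K \<subseteq> \<Union>V" using eq by auto
    then have cov: "K \<subseteq> (\<Union>c\<in>V. id c)" by simp
    obtain C' where C': "C' \<subseteq> V" "finite C'" "K \<subseteq> (\<Union>c\<in>C'. id c)"
      by (rule compactE_image[of K V id, OF cK _ cov]) (simp add: V_def)
    have N: "(\<Union>c\<in>C'. c) \<in> null_sets M"
    proof (rule null_sets_UN')
      show "countable C'" using C'(2) by (rule countable_finite)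
      fix c assume "c \<in> C'"
      then have "open c" "emeasure M c = 0" using C'(1) by (auto simp: V_def)
      then show "c \<in> null_sets M" unfolding null_sets_def using S(1) by auto
    qed
    have Ks: "K \<in> sets M"
    proof -
      have "closed K" using cK by (rule compact_imp_closed)
      then show ?thesis unfolding S(1) by (rule borel_closed)
    qed
    have "K \<in> null_sets M" by (rule null_sets_subset[OF N Ks]) (use C'(3) in simp)
    then show "emeasure M K \<le> 0" by auto
  qed
  finally show ?thesis by simp
qed

lemma support_point_pos:
  fixes M :: "'a::t2_space measure"
  assumes R: "radon_measure M" and fin: "finite (measure_support M)" and x: "x \<in> measure_support M"
  shows "emeasure M {x} > 0"
proof -
  note S = radon_sets[OF R]
  define U where "U = - (measure_support M - {x})"
  have "open U" unfolding U_def using fin by (intro open_Compl finite_imp_closed) auto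
  then have "emeasure M U > 0" using x by (auto simp: U_def measure_support_def)
  also have "emeasure M U \<le> emeasure M ({x} \<union> - measure_support M)"
    by (rule emeasure_mono) (auto simp: U_def S fin finite_imp_closed)
  also have "\<dots> \<le> emeasure M {x} + emeasure M (- measure_support M)"
    by (rule emeasure_subadditive) (auto simp: S fin finite_imp_closed)
  also have "\<dots> = emeasure M {x}" using support_null[OF R] by simp
  finally show ?thesis .
qed

lemma small_sets:
  fixes M :: "'a::t2_space measure"
  assumes R: "radon_measure M" and F: "finite_measure M"
    and inf: "infinite (measure_support M)" and eta: "\<eta> > 0"
  shows "\<exists>A\<in>sets M. 0 < measure M A \<and> measure M A < \<eta>"
proof (cases "\<exists>x\<in>measure_support M. emeasure M {x} = 0")
  case True
  note S = radon_sets[OF R]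
  from True obtain x where x: "x \<in> measure_support M" "emeasure M {x} = 0" by auto
  have "{x} \<in> sets M" using S by auto
  then have "emeasure M {x} = (INF U\<in>{U. open U \<and> {x} \<subseteq> U}. emeasure M U)"
    using R by (auto simp: radon_measure_def)
  then have "(INF U\<in>{U. open U \<and> {x} \<subseteq> U}. emeasure M U) < ennreal \<eta>" using x eta by simp
  then obtain U where U: "open U" "x \<in> U" "emeasure M U < ennreal \<eta>"
    by (auto simp: INF_less_iff)
  have pos: "emeasure M U > 0" using U x by (auto simp: measure_support_def)
  have "U \<in> sets M" using U S by auto
  moreover have "0 < measure M U" "measure M U < \<eta>"
    using pos U(3) eta by (auto simp: finite_measure.emeasure_eq_measure[OF F] ennreal_less_iff)
  ultimately show ?thesis by auto
next
  case False
  note S = radon_sets[OF R]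
  define m where "m = measure M (space M)"
  obtain N :: nat where N: "m < real N * \<eta>"
    using reals_Archimedean3[OF eta] by auto
  obtain G where G: "G \<subseteq> measure_support M" "finite G" "card G = N"
    using infinite_arbitrarily_large[OF inf] by blast
  show ?thesis
  proof (rule ccontr)
    assume H: "\<not> ?thesis"
    have pos: "\<forall>x\<in>G. 0 < measure M {x}"
      using False G(1) F by (auto simp: finite_measure.emeasure_eq_measure zero_less_measure_iff)
    have ge: "\<forall>x\<in>G. \<eta> \<le> measure M {x}"
    proof
      fix x assume x: "x \<in> G"
      have "{x} \<in> sets M" using S by simp
      then show "\<eta> \<le> measure M {x}" using H pos x by (meson not_less)
    qed
    have "real N * \<eta> = (\<Sum>x\<in>G. \<eta>)" using G by simp
    also have "\<dots> \<le> (\<Sum>x\<in>G. measure M {x})" using ge by (intro sum_mono) auto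
    also have "\<dots> = measure M G"
      using G S F by (intro measure_eq_sum_singleton[symmetric]) (auto simp: finite_measure.emeasure_finite)
    also have "\<dots> \<le> m" unfolding m_def using F S G
      by (intro finite_measure.bounded_measure) auto
    finally show False using N by simp
  qed
qed

lemma part_fin:
  fixes M :: "'a::t2_space measure"
  assumes R: "radon_measure M" and F: "finite_measure M"
    and fin: "finite (measure_support M)" and m0: "measure M UNIV > 0" and p: "1 \<le> p"
  shows "\<exists>\<epsilon>>1. Lp_pos M p \<subseteq> Lp_cone_eps M p \<epsilon>"
proof -
  note S = radon_sets[OF R]
  define m where "m = measure M UNIV"
  define Sp where "Sp = measure_support M"
  have Sp_sets: "Sp \<in> sets M" "- Sp \<in> sets M" using S fin by (auto simp: Sp_def finite_imp_closed)
  have nul: "emeasure M (- Sp) = 0" using support_null[OF R] by (simp add: Sp_def)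
  have ne: "Sp \<noteq> {}"
  proof
    assume "Sp = {}"
    then have "emeasure M UNIV = 0" using nul by simp
    then show False using m0 F by (simp add: finite_measure.emeasure_eq_measure)
  qed
  define \<delta> where "\<delta> = Min ((\<lambda>x. measure M {x}) ` Sp)"
  have ptpos: "measure M {x} > 0" if "x \<in> Sp" for x
    using support_point_pos[OF R fin, of x] that F
    by (simp add: Sp_def finite_measure.emeasure_eq_measure)
  have d0: "\<delta> > 0" unfolding \<delta>_def using fin ne ptpos by (auto simp: Sp_def)
  have big: "measure M B \<ge> \<delta>" if B: "B \<in> sets M" "measure M B > 0" for B
  proof -
    have "B \<inter> Sp \<noteq> {}"
    proof
      assume "B \<inter> Sp = {}"
      then have "B \<subseteq> - Sp" by auto
      then have "emeasure M B \<le> emeasure M (- Sp)" by (rule emeasure_mono) (use Sp_sets in auto)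
      then have "emeasure M B = 0" using nul by simp
      then show False using B F by (simp add: finite_measure.emeasure_eq_measure)
    qed
    then obtain x where x: "x \<in> B" "x \<in> Sp" by auto
    have "\<delta> \<le> measure M {x}" unfolding \<delta>_def using fin x by (auto simp: Sp_def)
    also have "\<dots> \<le> measure M B" using x B F S by (intro finite_measure.finite_measure_mono) auto
    finally show ?thesis .
  qed
  have dm: "\<delta> \<le> m" unfolding m_def using big[of UNIV] m0 S by auto
  have md: "m - \<delta>/2 > 0" using dm d0 by simp
  define \<epsilon> where "\<epsilon> = (m / (m - \<delta>/2)) powr (1/p)"
  have e1: "\<epsilon> > 1" unfolding \<epsilon>_def using md d0 p by (intro gr_one_powr) (auto simp: field_simps)
  have ekey: "\<epsilon> * (m - \<delta>) powr (1/p) < m powr (1/p)"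
  proof -
    have "\<epsilon> * (m - \<delta>) powr (1/p) = (m / (m - \<delta>/2) * (m - \<delta>)) powr (1/p)"
      unfolding \<epsilon>_def by (rule powr_mult[symmetric])
    also have "\<dots> < m powr (1/p)"
    proof (rule powr_less_mono2)
      show "0 < 1/p" using p by simp
      have "0 \<le> m / (m - \<delta>/2)" using md m0 by (simp add: m_def)
      then show "0 \<le> m / (m - \<delta>/2) * (m - \<delta>)" using dm by (intro mult_nonneg_nonneg) auto
      have "m * (m - \<delta>) < m * (m - \<delta>/2)" using m0 d0 unfolding m_def by simp
      then show "m / (m - \<delta>/2) * (m - \<delta>) < m" using md by (simp add: field_simps)
    qed
    finally show ?thesis .
  qed
  have fpos: "AE x in M. f x \<ge> 0" if f: "f \<in> S_eps M p \<epsilon>" for f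
  proof -
    have db: "dual_ball M p \<epsilon> f" and intf0: "(\<integral>x. f x \<partial>M) = m powr (1/p)"
      using f S by (auto simp: S_eps_def m_def)
    have intf: "integrable M f" using holder_ind[OF F p _ db, of UNIV] e1 S by auto
    have fm: "f \<in> borel_measurable M" using intf by auto
    define B where "B = {x. f x < 0}"
    have "{x \<in> space M. f x < 0} \<in> sets M" using fm by measurable
    then have Bs: "B \<in> sets M" using S by (simp add: B_def)
    show ?thesis
    proof (cases "measure M B = 0")
      case True
      then have "emeasure M B = 0" using F by (simp add: finite_measure.emeasure_eq_measure)
      then show ?thesis using Bs S by (subst AE_iff_measurable[of B]) (auto simp: B_def not_le)
    next
      case False
      then have "measure M B > 0" using measure_nonneg[of M B] by linarith
      then have Bd: "measure M B \<ge> \<delta>" using big Bs by auto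
      define C where "C = - B"
      have Cs: "C \<in> sets M" using Bs S by (auto simp: C_def)
      have mC: "measure M C = m - measure M B"
        using finite_measure.finite_measure_compl[OF F Bs] S by (simp add: C_def m_def Compl_eq_Diff_UNIV)
      have iC: "integrable M (\<lambda>x. f x * indicator C x)" using intf Cs by (intro integrable_real_mult_indicator) auto
      have iB: "integrable M (\<lambda>x. f x * indicator B x)" using intf Bs by (intro integrable_real_mult_indicator) auto
      have "m powr (1/p) = (\<integral>x. f x * indicator C x + f x * indicator B x \<partial>M)"
      proof -
        have "(\<lambda>x. f x * indicator C x + f x * indicator B x) = f"
          by (auto simp: C_def fun_eq_iff split: split_indicator)
        then show ?thesis using intf0 by simp
      qed
      also have "\<dots> = (\<integral>x. f x * indicator C x \<partial>M) + (\<integral>x. f x * indicator B x \<partial>M)"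
        using iC iB by simp
      also have "\<dots> \<le> (\<integral>x. \<bar>f x\<bar> * indicator C x \<partial>M) + 0"
      proof (rule add_mono)
        show "(\<integral>x. f x * indicator C x \<partial>M) \<le> (\<integral>x. \<bar>f x\<bar> * indicator C x \<partial>M)"
          using iC intf Cs by (intro integral_mono integrable_real_mult_indicator) (auto split: split_indicator)
        have "(\<integral>x. f x * indicator B x \<partial>M) \<le> (\<integral>x. 0 \<partial>M)"
          using iB by (intro integral_mono) (auto simp: B_def split: split_indicator)
        then show "(\<integral>x. f x * indicator B x \<partial>M) \<le> 0" by simp
      qed
      also have "\<dots> \<le> \<epsilon> * measure M C powr (1/p)"
        using holder_ind[OF F p _ db Cs] e1 by simp
      also have "\<dots> \<le> \<epsilon> * (m - \<delta>) powr (1/p)"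
        using mC Bd e1 p finite_measure.bounded_measure[OF F, of B] S by (intro mult_left_mono powr_mono2) (auto simp: m_def)
      finally show ?thesis using ekey by simp
    qed
  qed
  have "Lp_pos M p \<subseteq> Lp_cone_eps M p \<epsilon>"
  proof
    fix g assume g: "g \<in> Lp_pos M p"
    have "(\<integral>x. g x * f x \<partial>M) \<ge> 0" if "f \<in> S_eps M p \<epsilon>" for f
    proof (rule integral_nonneg_AE)
      have "AE x in M. 0 \<le> g x" using g by (simp add: Lp_pos_def)
      then show "AE x in M. 0 \<le> g x * f x" using fpos[OF that]
        by eventually_elim simp
    qed
    then show "g \<in> Lp_cone_eps M p \<epsilon>" using g by (auto simp: Lp_pos_def Lp_cone_eps_def)
  qed
  then show ?thesis using e1 by auto
qed

lemma part_a:
  fixes M :: "'a measure"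
  assumes F: "finite_measure M" and sp: "space M = UNIV" and p: "1 \<le> p" and e: "\<epsilon> > 1"
    and A: "A \<in> sets M" and a0: "0 < measure M A"
    and aS: "measure M A < measure M UNIV * (\<epsilon> - 1) / (2 * \<epsilon>)"
  shows "\<not> Lp_pos M p \<subseteq> Lp_cone_eps M p \<epsilon>"
proof
  assume incl: "Lp_pos M p \<subseteq> Lp_cone_eps M p \<epsilon>"
  define m where "m = measure M UNIV"
  define a where "a = measure M A"
  have am: "a \<le> m" unfolding a_def m_def using finite_measure.bounded_measure[OF F, of A] sp by simp
  have aS': "a < m * (\<epsilon> - 1) / (2 * \<epsilon>)" using aS by (simp add: a_def m_def)
  have a0': "0 < a" using a0 by (simp add: a_def)
  have m0: "m > 0" using am a0' by simp
  have key: "m \<le> \<epsilon> * (m - 2 * a)" using aS' e by (simp add: field_simps)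
  have m2a: "m - 2 * a > 0"
  proof -
    have "m * (\<epsilon> - 1) / (2 * \<epsilon>) < m / 2" using m0 e by (simp add: field_simps)
    then show ?thesis using aS' by linarith
  qed
  define c where "c = m powr (1/p) / (m - 2 * a)"
  have c0: "c > 0" unfolding c_def using m0 m2a by simp
  have cm: "c * m powr (1 - 1/p) \<le> \<epsilon>"
  proof -
    have mm: "m powr (1/p) * m powr (1 - 1/p) = m" using m0 by (simp add: powr_add[symmetric])
    have "c * m powr (1 - 1/p) = (m powr (1/p) * m powr (1 - 1/p)) / (m - 2 * a)"
      unfolding c_def by simp
    also have "\<dots> = m / (m - 2 * a)" by (simp only: mm)
    also have "\<dots> \<le> \<epsilon>" using key m2a by (simp add: divide_le_eq mult.commute)
    finally show ?thesis .
  qed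
  define f where "f = (\<lambda>x. c * (1 - 2 * indicator A x) :: real)"
  have absf: "\<bar>f x\<bar> = c" for x using c0 by (simp add: f_def split: split_indicator)
  have fm: "f \<in> borel_measurable M" unfolding f_def using A by measurable
  have iA: "integrable M (\<lambda>x. indicator A x :: real)" by (rule fm_int_ind[OF F A])
  have spm: "measure M (space M) = m" by (simp add: sp m_def)
  have emsp: "emeasure M (space M) \<noteq> 0"
    using m0 F by (simp add: finite_measure.emeasure_eq_measure spm)
  have intf: "(\<integral>x. f x \<partial>M) = m powr (1/p)"
  proof -
    have "(\<integral>x. f x \<partial>M) = (\<integral>x. c - (2 * c) * indicator A x \<partial>M)"
      unfolding f_def by (simp add: algebra_simps)
    also have "\<dots> = c * m - 2 * c * a"
      using iA F A by (simp add: finite_measure.integrable_const spm a_def)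
    also have "\<dots> = c * (m - 2 * a)" by (simp add: algebra_simps)
    also have "\<dots> = m powr (1/p)" unfolding c_def using m2a by simp
    finally show ?thesis .
  qed
  have db: "dual_ball M p \<epsilon> f"
  proof (cases "p = 1")
    case True
    have "esssup M (\<lambda>x. ereal \<bar>f x\<bar>) = ereal c" using emsp by (simp add: absf esssup_const)
    moreover have "c \<le> \<epsilon>" using cm True m0 by simp
    ultimately show ?thesis using True fm by (simp add: dual_ball_def Linf_fun_def Linf_norm_def)
  next
    case False
    define q where "q = p / (p - 1)"
    have p1: "p > 1" using p False by simp
    have iq: "integrable M (\<lambda>x. \<bar>f x\<bar> powr q)" using F by (simp add: absf finite_measure.integrable_const)
    have "Lr_norm M q f = (m * c powr q) powr (1/q)"
      unfolding Lr_norm_def by (simp add: absf spm)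
    also have "\<dots> = m powr (1/q) * c" using m0 c0 p1 by (simp add: powr_mult powr_powr q_def)
    also have "1/q = 1 - 1/p" using p1 by (simp add: q_def field_simps)
    finally have "Lr_norm M q f \<le> \<epsilon>" using cm by (simp add: mult.commute)
    then show ?thesis using False fm iq by (simp add: dual_ball_def Lr_fun_def q_def)
  qed
  have fS: "f \<in> S_eps M p \<epsilon>" using db intf by (simp add: S_eps_def spm)
  define g where "g = (\<lambda>x. indicator A x :: real)"
  have gpos: "g \<in> Lp_pos M p"
  proof -
    have "(\<lambda>x. \<bar>g x\<bar> powr p) = g" using p by (auto simp: g_def fun_eq_iff split: split_indicator)
    then show ?thesis using iA A by (simp add: Lp_pos_def Lr_fun_def g_def)
  qed
  have "(\<integral>x. g x * f x \<partial>M) = (\<integral>x. (- c) * indicator A x \<partial>M)"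
    by (rule Bochner_Integration.integral_cong) (auto simp: g_def f_def split: split_indicator)
  also have "\<dots> = - c * a" using A by (simp add: a_def)
  also have "\<dots> < 0" using c0 a0' by simp
  finally have "\<not> (\<integral>x. g x * f x \<partial>M) \<ge> 0" by simp
  moreover have "g \<in> Lp_cone_eps M p \<epsilon>" using incl gpos by auto
  ultimately show False using fS by (auto simp: Lp_cone_eps_def)
qed

lemma part_b:
  fixes M :: "'a measure"
  assumes F: "finite_measure M" and sp: "space M = UNIV" and p: "1 \<le> p" and e: "\<epsilon> > 1"
    and A: "A \<in> sets M" and a0: "0 < measure M A"
    and aS: "measure M A < measure M UNIV / (2 * \<epsilon>) powr p"
  shows "\<not> Lp_cone_eps M p \<epsilon> \<subseteq> Lp_pos M p"
proof
  assume incl: "Lp_cone_eps M p \<epsilon> \<subseteq> Lp_pos M p"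
  define m where "m = measure M UNIV"
  define a where "a = measure M A"
  have a0': "0 < a" using a0 by (simp add: a_def)
  have m0: "0 \<le> m" by (simp add: m_def)
  have aS': "a \<le> m / (2 * \<epsilon>) powr p" using aS by (simp add: a_def m_def)
  have key: "2 * \<epsilon> * a powr (1/p) \<le> m powr (1/p)"
  proof -
    have "a powr (1/p) \<le> (m / (2 * \<epsilon>) powr p) powr (1/p)"
      using aS' a0' p by (intro powr_mono2) auto
    also have "\<dots> = m powr (1/p) / (2 * \<epsilon>)"
      using e p by (simp add: powr_divide powr_powr)
    finally show ?thesis using e by (simp add: field_simps)
  qed
  define g where "g = (\<lambda>x. 1 - 2 * indicator A x :: real)"
  have gm: "g \<in> borel_measurable M" unfolding g_def using A by measurable
  have absg: "\<bar>g x\<bar> powr p = 1" for x by (simp add: g_def split: split_indicator)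
  have spm: "measure M (space M) = m" by (simp add: sp m_def)
  have gc: "g \<in> Lp_cone_eps M p \<epsilon>"
    unfolding Lp_cone_eps_def
  proof (intro CollectI conjI ballI)
    show "Lr_fun M p g" using gm F by (simp add: Lr_fun_def absg finite_measure.integrable_const)
    fix f assume f: "f \<in> S_eps M p \<epsilon>"
    have db: "dual_ball M p \<epsilon> f" and intf0: "(\<integral>x. f x \<partial>M) = m powr (1/p)"
      using f by (auto simp: S_eps_def spm)
    have H: "integrable M f" "(\<integral>x. \<bar>f x\<bar> * indicator A x \<partial>M) \<le> \<epsilon> * a powr (1/p)"
      using holder_ind[OF F p _ db A] e by (auto simp: a_def)
    have iA: "integrable M (\<lambda>x. f x * indicator A x)" using H A by (intro integrable_real_mult_indicator) auto
    have iA': "integrable M (\<lambda>x. \<bar>f x\<bar> * indicator A x)" using H A by (intro integrable_real_mult_indicator) auto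
    have "(\<integral>x. g x * f x \<partial>M) = (\<integral>x. f x - 2 * (f x * indicator A x) \<partial>M)"
      by (rule Bochner_Integration.integral_cong) (auto simp: g_def algebra_simps)
    also have "\<dots> = m powr (1/p) - 2 * (\<integral>x. f x * indicator A x \<partial>M)"
      using H(1) iA intf0 by simp
    also have "\<dots> \<ge> m powr (1/p) - 2 * (\<epsilon> * a powr (1/p))"
    proof -
      have "(\<integral>x. f x * indicator A x \<partial>M) \<le> (\<integral>x. \<bar>f x\<bar> * indicator A x \<partial>M)"
        using iA iA' by (intro integral_mono) (auto split: split_indicator)
      then show ?thesis using H(2) by simp
    qed
    finally show "(\<integral>x. g x * f x \<partial>M) \<ge> 0" using key by simp
  qed
  then have "AE x in M. g x \<ge> 0" using incl by (auto simp: Lp_pos_def)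
  then have "AE x in M. x \<notin> A" by eventually_elim (auto simp: g_def split: split_indicator_asm)
  then have "emeasure M A = 0" using A sp by (subst (asm) AE_iff_measurable[of A]) auto
  then show False using a0 by (simp add: measure_def)
qed

theorem theorem5p6:
  fixes M :: "'a::t2_space measure" and p :: real
  assumes "locally_compact_space (euclidean :: 'a topology)"
    and "sigma_compact_type TYPE('a)"
    and "finite_measure M"
    and "radon_measure M"
    and "emeasure M (space M) > 0"
    and "1 \<le> p"
  shows "(\<exists>\<epsilon>>1. Lp_pos M p \<subseteq> Lp_cone_eps M p \<epsilon> \<or> Lp_cone_eps M p \<epsilon> \<subseteq> Lp_pos M p)
         \<longleftrightarrow> finite (measure_support M)"
proof -
  note R = assms(4) and F = assms(3) and p = assms(6)
  note S = radon_sets[OF R]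
  have m0: "measure M UNIV > 0"
    using assms(5) F S by (simp add: finite_measure.emeasure_eq_measure)
  show ?thesis
  proof
    assume "\<exists>\<epsilon>>1. Lp_pos M p \<subseteq> Lp_cone_eps M p \<epsilon> \<or> Lp_cone_eps M p \<epsilon> \<subseteq> Lp_pos M p"
    then obtain \<epsilon> where e: "\<epsilon> > 1"
      and incl: "Lp_pos M p \<subseteq> Lp_cone_eps M p \<epsilon> \<or> Lp_cone_eps M p \<epsilon> \<subseteq> Lp_pos M p" by blast
    show "finite (measure_support M)"
    proof (rule ccontr)
      assume inf: "infinite (measure_support M)"
      from incl show False
      proof
        assume i: "Lp_pos M p \<subseteq> Lp_cone_eps M p \<epsilon>"
        have "measure M UNIV * (\<epsilon> - 1) / (2 * \<epsilon>) > 0" using m0 e by simp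
        then obtain A where "A \<in> sets M" "0 < measure M A"
          "measure M A < measure M UNIV * (\<epsilon> - 1) / (2 * \<epsilon>)"
          using small_sets[OF R F inf] by blast
        then show False using part_a[OF F S(2) p e] i by blast
      next
        assume i: "Lp_cone_eps M p \<epsilon> \<subseteq> Lp_pos M p"
        have "measure M UNIV / (2 * \<epsilon>) powr p > 0" using m0 e by simp
        then obtain A where "A \<in> sets M" "0 < measure M A"
          "measure M A < measure M UNIV / (2 * \<epsilon>) powr p"
          using small_sets[OF R F inf] by blast
        then show False using part_b[OF F S(2) p e] i by blast
      qed
    qed
  next
    assume fin: "finite (measure_support M)"
    show "\<exists>\<epsilon>>1. Lp_pos M p \<subseteq> Lp_cone_eps M p \<epsilon> \<or> Lp_cone_eps M p \<epsilon> \<subseteq> Lp_pos M p"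
      using part_fin[OF R F fin m0 p] by blast
  qed
qed

end
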